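(* Let $f$ be the map defined in the context. Then: (i) $f$ is continuous at every nega-$Q$-irrational point of $[a_0-1,a_0]$; (ii) if $q_n=q$ for all positive integers $n$, then $f$ is continuous at every point of $[a_0-1,a_0]$ (including all nega-$Q$-rational points); (iii) if $x_0=\Delta^{-Q}_{\varepsilon_1\ldots\varepsilon_{m-1}\varepsilon_m[q_{m+1}-1]0[q_{m+3}-1]0[q_{m+5}-1]\ldots}=\Delta^{-Q}_{\varepsilon_1\ldots\varepsilon_{m-1}[\varepsilon_m-1]0[q_{m+2}-1]0[q_{m+4}-1]0\ldots}$ (with $\varepsilon_m\ge 1$) is a nega-$Q$-rational point and there exists a positive integer $n>m$ with $q_n<q$, then $x_0$ is a point of discontinuity of $f$.
   Context: Let $Q=(q_k)_{k\ge1}$ be a sequence of integers with $q_k\ge 2$, and let $q\ge 2$ be an integer with $q_k\le q$ for all $k$. Put $a_0=\sum_{k\ge1}\frac{q_{2k}-1}{q_1q_2\cdots q_{2k}}$. Every $x\in[a_0-1,a_0]$ can be written as an alternating Cantor series (nega-$Q$-representation) $x=\Delta^{-Q}_{\varepsilon_1\varepsilon_2\ldots}:=\sum_{k\ge1}\frac{(-1)^k\varepsilon_k}{q_1q_2\cdots q_k}$ with digits $\varepsilon_k\in\{0,1,\ldots,q_k-1\}$. A point is called nega-$Q$-rational if it has two representations, namely $\Delta^{-Q}_{\varepsilon_1\ldots\varepsilon_{m-1}\varepsilon_m[q_{m+1}-1]0[q_{m+3}-1]0[q_{m+5}-1]\ldots}=\Delta^{-Q}_{\varepsilon_1\ldots\varepsilon_{m-1}[\varepsilon_m-1]0[q_{m+2}-1]0[q_{m+4}-1]0\ldots}$;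 all other points (nega-$Q$-irrational) have a unique representation. Convention: for nega-$Q$-rational points, only the first of these two representations (the one ending in $\varepsilon_m[q_{m+1}-1]0[q_{m+3}-1]0\ldots$) is used. The nega-$q$-ary representation is $\Delta^{-q}_{\alpha_1\alpha_2\ldots}:=\sum_{k\ge1}\frac{\alpha_k}{(-q)^k}$ with $\alpha_k\in\{0,\ldots,q-1\}$. The map $f:[a_0-1,a_0]\to\mathbb R$ is defined by $f\left(\Delta^{-Q}_{\varepsilon_1\varepsilon_2\ldots}\right)=\Delta^{-q}_{\varepsilon_1\varepsilon_2\ldots}=\sum_{n\ge1}\frac{\varepsilon_n}{(-q)^n}$. *)

theory Defs
  imports "HOL-Analysis.Analysis"
begin

text \<open>Sequences Q, digit sequences eps are functions nat => nat; only indices k >= 1 matter.\<close>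

definition prodQ :: "(nat \<Rightarrow> nat) \<Rightarrow> nat \<Rightarrow> real" where
  "prodQ Q k = (\<Prod>i\<in>{1..k}. real (Q i))"

definition valid_digits :: "(nat \<Rightarrow> nat) \<Rightarrow> (nat \<Rightarrow> nat) \<Rightarrow> bool" where
  "valid_digits Q eps \<longleftrightarrow> (\<forall>k\<ge>1. eps k < Q k)"

definition negaQ :: "(nat \<Rightarrow> nat) \<Rightarrow> (nat \<Rightarrow> nat) \<Rightarrow> real" where
  "negaQ Q eps = (\<Sum>n. (-1) ^ Suc n * real (eps (Suc n)) / prodQ Q (Suc n))"

definition negaq :: "nat \<Rightarrow> (nat \<Rightarrow> nat) \<Rightarrow> real" where
  "negaq q alpha = (\<Sum>n. real (alpha (Suc n)) / (- real q) ^ Suc n)"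

definition a0 :: "(nat \<Rightarrow> nat) \<Rightarrow> real" where
  "a0 Q = (\<Sum>n. (real (Q (2 * Suc n)) - 1) / prodQ Q (2 * Suc n))"

definition rational_pair :: "(nat \<Rightarrow> nat) \<Rightarrow> (nat \<Rightarrow> nat) \<Rightarrow> (nat \<Rightarrow> nat) \<Rightarrow> nat \<Rightarrow> bool" where
  "rational_pair Q eps eps' m \<longleftrightarrow>
     1 \<le> m \<and> 1 \<le> eps m \<and>
     (\<forall>k. 1 \<le> k \<and> k < m \<longrightarrow> eps' k = eps k) \<and>
     eps' m = eps m - 1 \<and>
     (\<forall>j. eps (m + 2*j + 1) = Q (m + 2*j + 1) - 1 \<and> eps (m + 2*j + 2) = 0) \<and>
     (\<forall>j. eps' (m + 2*j + 1) = 0 \<and> eps' (m + 2*j + 2) = Q (m + 2*j + 2) - 1)"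

definition negaQ_rational :: "(nat \<Rightarrow> nat) \<Rightarrow> real \<Rightarrow> bool" where
  "negaQ_rational Q x \<longleftrightarrow>
     (\<exists>eps eps' m. valid_digits Q eps \<and> valid_digits Q eps' \<and> rational_pair Q eps eps' m \<and>
        negaQ Q eps = x \<and> negaQ Q eps' = x)"

text \<open>The representation used by convention: an admissible representation of x which is not
  the second representation (eps') of a nega-Q-rational pair. Digits at index 0 are normalised to 0.\<close>
definition used_repr :: "(nat \<Rightarrow> nat) \<Rightarrow> (nat \<Rightarrow> nat) \<Rightarrow> bool" where
  "used_repr Q eps \<longleftrightarrow> valid_digits Q eps \<and> eps 0 = 0 \<and>
     \<not> (\<exists>e m. valid_digits Q e \<and> rational_pair Q e eps m)"

definition fmap :: "(nat \<Rightarrow> nat) \<Rightarrow> nat \<Rightarrow> real \<Rightarrow> real" where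
  "fmap Q q x = negaq q (THE eps. used_repr Q eps \<and> negaQ Q eps = x)"

end

theory Submission
  imports Defs
begin


definition shQ :: "nat \<Rightarrow> (nat \<Rightarrow> nat) \<Rightarrow> nat \<Rightarrow> nat" where
  "shQ n Q k = Q (n + k)"

definition hiS :: "(nat \<Rightarrow> nat) \<Rightarrow> nat \<Rightarrow> nat" where
  "hiS Q k = (if even k then Q k - 1 else 0)"

definition loS :: "(nat \<Rightarrow> nat) \<Rightarrow> nat \<Rightarrow> nat" where
  "loS Q k = (if odd k then Q k - 1 else 0)"

definition tm :: "(nat \<Rightarrow> nat) \<Rightarrow> (nat \<Rightarrow> nat) \<Rightarrow> nat \<Rightarrow> real" where
  "tm Q e k = (-1) ^ Suc k * real (e (Suc k)) / prodQ Q (Suc k)"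

definition vQ :: "(nat \<Rightarrow> nat) \<Rightarrow> bool" where
  "vQ Q \<longleftrightarrow> (\<forall>k\<ge>1. 2 \<le> Q k)"

definition hiV where "hiV Q = negaQ Q (hiS Q)"
definition loV where "loV Q = negaQ Q (loS Q)"

lemma prodQ_0[simp]: "prodQ Q 0 = 1"
  by (simp add: prodQ_def)

lemma prodQ_Suc: "prodQ Q (Suc k) = prodQ Q k * real (Q (Suc k))"
  by (simp add: prodQ_def prod.nat_ivl_Suc' mult.commute)

lemma prodQ_ge: "vQ Q \<Longrightarrow> prodQ Q k \<ge> 2 ^ k"
proof (induction k)
  case (Suc k)
  have "real (Q (Suc k)) \<ge> 2" using Suc.prems by (simp add: vQ_def)
  then have "prodQ Q k * real (Q (Suc k)) \<ge> 2^k * 2"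
    using Suc by (intro mult_mono) (auto intro: order.trans[OF _ Suc.IH])
  then show ?case by (simp add: prodQ_Suc mult.commute)
qed simp

lemma prodQ_pos: "vQ Q \<Longrightarrow> prodQ Q k > 0"
  using prodQ_ge[of Q k] by (smt (verit) zero_less_power)

lemma shQ_shQ: "shQ n (shQ m Q) = shQ (m + n) Q"
  by (rule ext) (simp add: shQ_def add.assoc)

lemma shQ_0[simp]: "shQ 0 Q = Q"
  by (rule ext) (simp add: shQ_def)

lemma vQ_shQ: "vQ Q \<Longrightarrow> vQ (shQ n Q)"
  by (simp add: vQ_def shQ_def)

lemma valid_shQ: "valid_digits Q e \<Longrightarrow> valid_digits (shQ n Q) (shQ n e)"
  by (simp add: valid_digits_def shQ_def)

lemma prodQ_add: "prodQ Q (n + k) = prodQ Q n * prodQ (shQ n Q) k"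
  by (induction k) (simp_all add: prodQ_Suc shQ_def)

lemma tm_bound: "valid_digits Q e \<Longrightarrow> vQ Q \<Longrightarrow>
  \<bar>tm Q e k\<bar> \<le> (real (Q (Suc k)) - 1) / prodQ Q (Suc k)"
proof -
  assume v: "valid_digits Q e" and q: "vQ Q"
  have "e (Suc k) < Q (Suc k)" using v by (simp add: valid_digits_def)
  then have "real (e (Suc k)) \<le> real (Q (Suc k)) - 1" by linarith
  moreover have "prodQ Q (Suc k) > 0" using prodQ_pos[OF q] .
  ultimately show ?thesis
    by (simp add: tm_def abs_mult divide_right_mono)
qed

lemma sums_one: "vQ Q \<Longrightarrow> (\<lambda>k. (real (Q (Suc k)) - 1) / prodQ Q (Suc k)) sums 1"
proof -
  assume q: "vQ Q"
  have lim: "(\<lambda>n. - 1 / prodQ Q n) \<longlonglongrightarrow> 0"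
  proof -
    have "(\<lambda>n. 1 / prodQ Q n) \<longlonglongrightarrow> 0"
    proof (rule Lim_null_comparison[of _ "\<lambda>n. (1/2) ^ n"])
      show "\<forall>\<^sub>F n in sequentially. norm (1 / prodQ Q n) \<le> (1/2) ^ n"
        using prodQ_ge[OF q] prodQ_pos[OF q]
        by (auto simp: power_one_over intro!: always_eventually frac_le
             simp del: power_divide) (metis abs_of_pos)
      show "(\<lambda>n. (1/2::real) ^ n) \<longlonglongrightarrow> 0" by (rule LIMSEQ_power_zero) auto
    qed
    then show ?thesis using tendsto_minus[of "\<lambda>n. 1 / prodQ Q n" 0] by simp
  qed
  have "(\<lambda>n. - 1 / prodQ Q (Suc n) - - 1 / prodQ Q n) sums (0 - - 1 / prodQ Q 0)"
    by (rule telescope_sums[OF lim])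
  moreover have "\<And>n. - 1 / prodQ Q (Suc n) - - 1 / prodQ Q n = (real (Q (Suc n)) - 1) / prodQ Q (Suc n)"
  proof -
    fix n
    have "prodQ Q n > 0" "real (Q (Suc n)) > 0" using prodQ_pos[OF q] q[unfolded vQ_def, rule_format, of "Suc n"] by auto
    then show "- 1 / prodQ Q (Suc n) - - 1 / prodQ Q n = (real (Q (Suc n)) - 1) / prodQ Q (Suc n)"
      by (simp add: prodQ_Suc field_simps)
  qed
  ultimately show ?thesis by simp
qed

lemma summable_tm: "valid_digits Q e \<Longrightarrow> vQ Q \<Longrightarrow> summable (tm Q e)"
  by (rule summable_rabs_cancel, rule summable_comparison_test[OF _ sums_summable[OF sums_one]])
     (auto intro!: exI tm_bound)

lemma negaQ_tm: "negaQ Q e = suminf (tm Q e)"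
  unfolding negaQ_def tm_def by (rule refl)



lemma negaQ_split:
  assumes "valid_digits Q e" "vQ Q"
  shows "negaQ Q e = (\<Sum>k<n. tm Q e k) + (-1)^n / prodQ Q n * negaQ (shQ n Q) (shQ n e)"
proof -
  have s: "summable (tm Q e)" using summable_tm[OF assms] .
  have s2: "summable (tm (shQ n Q) (shQ n e))"
    using summable_tm[OF valid_shQ[OF assms(1)] vQ_shQ[OF assms(2)]] .
  have eq: "\<And>j. tm Q e (j + n) = (-1)^n / prodQ Q n * tm (shQ n Q) (shQ n e) j"
  proof -
    fix j
    have "prodQ Q (Suc (j + n)) = prodQ Q n * prodQ (shQ n Q) (Suc j)"
      using prodQ_add[of Q n "Suc j"] by (simp add: add.commute)
    then show "tm Q e (j + n) = (-1)^n / prodQ Q n * tm (shQ n Q) (shQ n e) j"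
      by (simp add: tm_def shQ_def power_add add.commute)
  qed
  have "negaQ Q e = (\<Sum>j. tm Q e (j + n)) + (\<Sum>k<n. tm Q e k)"
    using suminf_split_initial_segment[OF s] by (simp add: negaQ_tm)
  also have "(\<Sum>j. tm Q e (j + n)) = (-1)^n / prodQ Q n * negaQ (shQ n Q) (shQ n e)"
    unfolding eq negaQ_tm by (rule suminf_mult[OF s2])
  finally show ?thesis by simp
qed

lemma negaQ_cong: "(\<forall>k\<ge>1. e k = d k) \<Longrightarrow> negaQ Q e = negaQ Q d"
  unfolding negaQ_def by simp

lemma negaQ_congQ: "(\<forall>k\<ge>1. Q k = Q' k) \<Longrightarrow> negaQ Q e = negaQ Q' e"
proof -
  assume h: "\<forall>k\<ge>1. Q k = Q' k"
  have "\<And>k. prodQ Q k = prodQ Q' k" unfolding prodQ_def using h by (intro prod.cong) auto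
  then show ?thesis unfolding negaQ_def by simp
qed

lemma valid_hiS: "vQ Q \<Longrightarrow> valid_digits Q (hiS Q)"
  unfolding valid_digits_def hiS_def vQ_def by (metis diff_less gr_implies_not0 less_2_cases_iff linorder_not_le
      not_gr_zero zero_less_one)

lemma valid_loS: "vQ Q \<Longrightarrow> valid_digits Q (loS Q)"
  unfolding valid_digits_def loS_def vQ_def by (metis diff_less gr_implies_not0 less_2_cases_iff linorder_not_le
      not_gr_zero zero_less_one)

lemma tm_hi_lo: "vQ Q' \<Longrightarrow> tm Q'' (hiS Q') k - tm Q'' (loS Q') k = (real (Q' (Suc k)) - 1) / prodQ Q'' (Suc k)"
proof -
  assume "vQ Q'"
  then have "Q' (Suc k) \<ge> 2" by (simp add: vQ_def)
  then have r: "real (Q' (Suc k) - Suc 0) = real (Q' (Suc k)) - 1" by simp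
  show ?thesis
    using \<open>Q' (Suc k) \<ge> 2\<close>
    by (cases "even k") (simp_all add: tm_def hiS_def loS_def r diff_divide_distrib)
qed

lemma hi_minus_lo:
  assumes "vQ Q''" "vQ Q'" "\<forall>k\<ge>1. Q' k \<le> Q'' k"
  shows "negaQ Q'' (hiS Q') - negaQ Q'' (loS Q') = (\<Sum>k. (real (Q' (Suc k)) - 1) / prodQ Q'' (Suc k))"
proof -
  have v1: "valid_digits Q'' (hiS Q')" "valid_digits Q'' (loS Q')"
    using valid_hiS[OF assms(2)] valid_loS[OF assms(2)] assms(3) unfolding valid_digits_def
    by (meson less_le_trans)+
  show ?thesis unfolding negaQ_tm
    using suminf_diff[OF summable_tm[OF v1(1) assms(1)] summable_tm[OF v1(2) assms(1)]]
    by (simp add: tm_hi_lo[OF assms(2)])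
qed

lemma hiV_loV: "vQ Q \<Longrightarrow> hiV Q - loV Q = 1"
  unfolding hiV_def loV_def
  using hi_minus_lo[of Q Q] sums_unique[OF sums_one[of Q]] by simp

lemma all_Suc_iff: "(\<forall>k. P (Suc k)) \<longleftrightarrow> (\<forall>k\<ge>1. P k)"
proof
  assume h: "\<forall>k. P (Suc k)"
  show "\<forall>k\<ge>1. P k"
  proof (intro allI impI)
    fix k :: nat assume "1 \<le> k"
    then obtain j where "k = Suc j" by (cases k) auto
    then show "P k" using h by simp
  qed
qed simp

lemma le_hiV:
  assumes "valid_digits Q e" "vQ Q"
  shows "negaQ Q e \<le> hiV Q" and "negaQ Q e = hiV Q \<longleftrightarrow> (\<forall>k\<ge>1. e k = hiS Q k)"
proof -
  define f where "f k = tm Q (hiS Q) k - tm Q e k" for k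
  have s: "summable f" unfolding f_def
    by (intro summable_diff summable_tm assms valid_hiS)
  have eq: "hiV Q - negaQ Q e = suminf f" unfolding f_def hiV_def negaQ_tm
    by (rule suminf_diff[OF summable_tm[OF valid_hiS[OF assms(2)] assms(2)] summable_tm[OF assms]])
  have fk: "f k = (-1)^Suc k * (real (hiS Q (Suc k)) - real (e (Suc k))) / prodQ Q (Suc k)" for k
    by (simp add: f_def tm_def diff_divide_distrib right_diff_distrib)
  have pos: "0 \<le> f k" for k
  proof -
    have lt: "e (Suc k) < Q (Suc k)" using assms(1) by (simp add: valid_digits_def)
    have "0 \<le> (-1::real)^Suc k * (real (hiS Q (Suc k)) - real (e (Suc k)))"
      using lt by (cases "even k") (auto simp: hiS_def)
    note nn = this
    have p: "0 < prodQ Q (Suc k)" by (rule prodQ_pos[OF assms(2)])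
    show ?thesis using divide_nonneg_pos[OF nn p] by (simp only: fk)
  qed
  have z: "f k = 0 \<longleftrightarrow> e (Suc k) = hiS Q (Suc k)" for k
  proof -
    have p: "prodQ Q (Suc k) \<noteq> 0" using prodQ_pos[OF assms(2), of "Suc k"] by linarith
    have "f k = 0 \<longleftrightarrow> (-1::real)^Suc k * (real (hiS Q (Suc k)) - real (e (Suc k))) = 0"
      unfolding fk divide_eq_0_iff using p by blast
    also have "\<dots> \<longleftrightarrow> real (hiS Q (Suc k)) - real (e (Suc k)) = 0" by (simp only: mult_eq_0_iff) simp
    also have "\<dots> \<longleftrightarrow> e (Suc k) = hiS Q (Suc k)" by linarith
    finally show ?thesis .
  qed
  show "negaQ Q e \<le> hiV Q" using eq suminf_nonneg[OF s pos] by linarith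
  show "negaQ Q e = hiV Q \<longleftrightarrow> (\<forall>k\<ge>1. e k = hiS Q k)"
  proof -
    have "negaQ Q e = hiV Q \<longleftrightarrow> suminf f = 0" using eq by linarith
    also have "\<dots> \<longleftrightarrow> (\<forall>k. f k = 0)" by (rule suminf_eq_zero_iff[OF s pos])
    also have "\<dots> \<longleftrightarrow> (\<forall>k. e (Suc k) = hiS Q (Suc k))" by (simp only: z)
    also have "\<dots> \<longleftrightarrow> (\<forall>k\<ge>1. e k = hiS Q k)" by (rule all_Suc_iff)
    finally show ?thesis .
  qed
qed

lemma ge_loV:
  assumes "valid_digits Q e" "vQ Q"
  shows "loV Q \<le> negaQ Q e" and "negaQ Q e = loV Q \<longleftrightarrow> (\<forall>k\<ge>1. e k = loS Q k)"
proof -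
  define f where "f k = tm Q e k - tm Q (loS Q) k" for k
  have s: "summable f" unfolding f_def
    by (intro summable_diff summable_tm assms valid_loS)
  have eq: "negaQ Q e - loV Q = suminf f" unfolding f_def loV_def negaQ_tm
    by (rule suminf_diff[OF summable_tm[OF assms] summable_tm[OF valid_loS[OF assms(2)] assms(2)]])
  have fk: "f k = (-1)^Suc k * (real (e (Suc k)) - real (loS Q (Suc k))) / prodQ Q (Suc k)" for k
    by (simp add: f_def tm_def diff_divide_distrib right_diff_distrib)
  have pos: "0 \<le> f k" for k
  proof -
    have lt: "e (Suc k) < Q (Suc k)" using assms(1) by (simp add: valid_digits_def)
    have "0 \<le> (-1::real)^Suc k * (real (e (Suc k)) - real (loS Q (Suc k)))"
      using lt by (cases "even k") (auto simp: loS_def)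
    note nn = this
    have p: "0 < prodQ Q (Suc k)" by (rule prodQ_pos[OF assms(2)])
    show ?thesis using divide_nonneg_pos[OF nn p] by (simp only: fk)
  qed
  have z: "f k = 0 \<longleftrightarrow> e (Suc k) = loS Q (Suc k)" for k
  proof -
    have p: "prodQ Q (Suc k) \<noteq> 0" using prodQ_pos[OF assms(2), of "Suc k"] by linarith
    have "f k = 0 \<longleftrightarrow> (-1::real)^Suc k * (real (e (Suc k)) - real (loS Q (Suc k))) = 0"
      unfolding fk divide_eq_0_iff using p by blast
    also have "\<dots> \<longleftrightarrow> real (e (Suc k)) - real (loS Q (Suc k)) = 0" by (simp only: mult_eq_0_iff) simp
    also have "\<dots> \<longleftrightarrow> e (Suc k) = loS Q (Suc k)" by linarith
    finally show ?thesis .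
  qed
  show "loV Q \<le> negaQ Q e" using eq suminf_nonneg[OF s pos] by linarith
  show "negaQ Q e = loV Q \<longleftrightarrow> (\<forall>k\<ge>1. e k = loS Q k)"
  proof -
    have "negaQ Q e = loV Q \<longleftrightarrow> suminf f = 0" using eq by linarith
    also have "\<dots> \<longleftrightarrow> (\<forall>k. f k = 0)" by (rule suminf_eq_zero_iff[OF s pos])
    also have "\<dots> \<longleftrightarrow> (\<forall>k. e (Suc k) = loS Q (Suc k))" by (simp only: z)
    also have "\<dots> \<longleftrightarrow> (\<forall>k\<ge>1. e k = loS Q k)" by (rule all_Suc_iff)
    finally show ?thesis .
  qed
qed

lemma hiV_bounds: "vQ Q \<Longrightarrow> 0 \<le> hiV Q \<and> hiV Q \<le> 1"
proof -
  assume q: "vQ Q"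
  have t: "tm Q (hiS Q) k = (if even (Suc k) then (real (Q (Suc k)) - 1) / prodQ Q (Suc k) else 0)" for k
  proof -
    have "Q (Suc k) \<ge> 2" using q by (simp add: vQ_def)
    then have r: "real (Q (Suc k) - 1) = real (Q (Suc k)) - 1" by simp
    have r2: "real (Q (Suc k) - Suc 0) = real (Q (Suc k)) - 1" using r by simp
    show ?thesis by (simp add: tm_def hiS_def r2 diff_divide_distrib)
  qed
  have nn0: "0 \<le> (real (Q (Suc k)) - 1) / prodQ Q (Suc k)" for k
    using q[unfolded vQ_def, rule_format, of "Suc k"] prodQ_pos[OF q, of "Suc k"] by auto
  have nn: "0 \<le> tm Q (hiS Q) k" for k
    unfolding t using q[unfolded vQ_def, rule_format, of "Suc k"] prodQ_pos[OF q, of "Suc k"] by auto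
  have s: "summable (tm Q (hiS Q))" by (intro summable_tm valid_hiS q)
  have "hiV Q \<le> (\<Sum>k. (real (Q (Suc k)) - 1) / prodQ Q (Suc k))"
    unfolding hiV_def negaQ_tm
    by (rule suminf_le[OF _ s sums_summable[OF sums_one[OF q]]]) (use nn0 t in auto)
  then show ?thesis using sums_unique[OF sums_one[OF q]] suminf_nonneg[OF s nn]
    unfolding hiV_def negaQ_tm by simp
qed

lemma a0_hiV: "vQ Q \<Longrightarrow> a0 Q = hiV Q"
proof -
  assume q: "vQ Q"
  have s: "tm Q (hiS Q) sums hiV Q" unfolding hiV_def negaQ_tm
    by (intro summable_sums summable_tm valid_hiS q)
  have "(\<lambda>n. tm Q (hiS Q) (2 * n + 1)) sums hiV Q"
  proof (subst sums_mono_reindex)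
    show "strict_mono (\<lambda>n::nat. 2 * n + 1)" by (rule strict_monoI) simp
    show "tm Q (hiS Q) n = 0" if "n \<notin> range (\<lambda>n. 2 * n + 1)" for n
    proof -
      have "even n" using that by (metis oddE rangeI)
      then show ?thesis by (simp add: tm_def hiS_def)
    qed
  qed (rule s)
  moreover have "tm Q (hiS Q) (2 * n + 1) = (real (Q (2 * Suc n)) - 1) / prodQ Q (2 * Suc n)" for n
  proof -
    have "Q (2 * Suc n) \<ge> 2" using q by (simp add: vQ_def)
    then show ?thesis by (simp add: tm_def hiS_def of_nat_diff)
  qed
  ultimately show ?thesis unfolding a0_def using sums_unique by fastforce
qed



lemma MD:
  assumes ve: "valid_digits Q e" and vd: "valid_digits Q d" and q: "vQ Q" and n: "1 \<le> n"
    and agree: "\<forall>k. 1 \<le> k \<and> k < n \<longrightarrow> e k = d k"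
  shows "negaQ Q e - negaQ Q d = (-1)^n / prodQ Q n *
    ((real (e n) - real (d n)) + (negaQ (shQ n Q) (shQ n e) - negaQ (shQ n Q) (shQ n d)))"
proof -
  obtain m where m: "n = Suc m" using n by (cases n) auto
  have s: "(\<Sum>k<m. tm Q e k) = (\<Sum>k<m. tm Q d k)"
    by (rule sum.cong) (use agree m in \<open>auto simp: tm_def\<close>)
  have "negaQ Q e - negaQ Q d = (tm Q e m - tm Q d m) + (-1)^n / prodQ Q n *
     (negaQ (shQ n Q) (shQ n e) - negaQ (shQ n Q) (shQ n d))"
    using negaQ_split[OF ve q, of n] negaQ_split[OF vd q, of n] s m
    by (simp add: right_diff_distrib)
  also have "tm Q e m - tm Q d m = (-1)^n / prodQ Q n * (real (e n) - real (d n))"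
    using m by (simp add: tm_def diff_divide_distrib right_diff_distrib)
  finally show ?thesis by (simp add: distrib_left)
qed

lemma even_ge1: "even (i::nat) \<Longrightarrow> 1 \<le> i \<Longrightarrow> \<exists>j. i = 2*j+2"
proof -
  assume "even i" "1 \<le> i"
  then obtain k where k: "i = 2*k" by blast
  then have "k \<ge> 1" using \<open>1 \<le> i\<close> by simp
  then have "i = 2*(k-1)+2" using k by simp
  then show ?thesis by blast
qed

lemma tails_lo: "(\<forall>j. e (m+2*j+1) = Q (m+2*j+1) - 1 \<and> e (m+2*j+2) = 0) \<longleftrightarrow>
   (\<forall>i\<ge>1. shQ m e i = loS (shQ m Q) i)"
proof
  assume h: "\<forall>j. e (m+2*j+1) = Q (m+2*j+1) - 1 \<and> e (m+2*j+2) = 0"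
  show "\<forall>i\<ge>1. shQ m e i = loS (shQ m Q) i"
  proof (intro allI impI)
    fix i :: nat assume i: "1 \<le> i"
    show "shQ m e i = loS (shQ m Q) i"
    proof (cases "odd i")
      case True
      then obtain j where "i = 2*j+1" by (metis oddE)
      then show ?thesis using h True by (simp add: shQ_def loS_def add.assoc)
    next
      case False
      then obtain j where "i = 2*j+2" using even_ge1[OF _ i] by blast
      then show ?thesis using h False by (simp add: shQ_def loS_def add.assoc)
    qed
  qed
next
  assume h: "\<forall>i\<ge>1. shQ m e i = loS (shQ m Q) i"
  show "\<forall>j. e (m+2*j+1) = Q (m+2*j+1) - 1 \<and> e (m+2*j+2) = 0"
  proof
    fix j
    have a: "shQ m e (2*j+1) = loS (shQ m Q) (2*j+1)" using h by simp
    have b: "shQ m e (2*j+2) = loS (shQ m Q) (2*j+2)" using h by simp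
    show "e (m+2*j+1) = Q (m+2*j+1) - 1 \<and> e (m+2*j+2) = 0"
      using a b by (simp add: shQ_def loS_def add.assoc)
  qed
qed

lemma tails_hi: "(\<forall>j. e (m+2*j+1) = 0 \<and> e (m+2*j+2) = Q (m+2*j+2) - 1) \<longleftrightarrow>
   (\<forall>i\<ge>1. shQ m e i = hiS (shQ m Q) i)"
proof
  assume h: "\<forall>j. e (m+2*j+1) = 0 \<and> e (m+2*j+2) = Q (m+2*j+2) - 1"
  show "\<forall>i\<ge>1. shQ m e i = hiS (shQ m Q) i"
  proof (intro allI impI)
    fix i :: nat assume i: "1 \<le> i"
    show "shQ m e i = hiS (shQ m Q) i"
    proof (cases "odd i")
      case True
      then obtain j where "i = 2*j+1" by (metis oddE)
      then show ?thesis using h True by (simp add: shQ_def hiS_def add.assoc)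
    next
      case False
      then obtain j where "i = 2*j+2" using even_ge1[OF _ i] by blast
      then show ?thesis using h False by (simp add: shQ_def hiS_def add.assoc)
    qed
  qed
next
  assume h: "\<forall>i\<ge>1. shQ m e i = hiS (shQ m Q) i"
  show "\<forall>j. e (m+2*j+1) = 0 \<and> e (m+2*j+2) = Q (m+2*j+2) - 1"
  proof
    fix j
    have a: "shQ m e (2*j+1) = hiS (shQ m Q) (2*j+1)" using h by simp
    have b: "shQ m e (2*j+2) = hiS (shQ m Q) (2*j+2)" using h by simp
    show "e (m+2*j+1) = 0 \<and> e (m+2*j+2) = Q (m+2*j+2) - 1"
      using a b by (simp add: shQ_def hiS_def add.assoc)
  qed
qed

lemma pair_value:
  assumes ve: "valid_digits Q e" and ve': "valid_digits Q e'" and q: "vQ Q"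
    and rp: "rational_pair Q e e' m"
  shows "negaQ Q e = negaQ Q e'"
proof -
  have m: "1 \<le> m" and em: "1 \<le> e m" and pre: "\<forall>k. 1 \<le> k \<and> k < m \<longrightarrow> e k = e' k"
    and e'm: "e' m = e m - 1"
    and t1: "\<forall>j. e (m+2*j+1) = Q (m+2*j+1) - 1 \<and> e (m+2*j+2) = 0"
    and t2: "\<forall>j. e' (m+2*j+1) = 0 \<and> e' (m+2*j+2) = Q (m+2*j+2) - 1"
    using rp unfolding rational_pair_def by auto
  have lo: "negaQ (shQ m Q) (shQ m e) = loV (shQ m Q)"
    unfolding loV_def by (rule negaQ_cong) (use t1[unfolded tails_lo] in auto)
  have hi: "negaQ (shQ m Q) (shQ m e') = hiV (shQ m Q)"
    unfolding hiV_def by (rule negaQ_cong) (use t2[unfolded tails_hi] in auto)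
  have d: "real (e m) - real (e' m) = 1" using e'm em by simp
  have "negaQ Q e - negaQ Q e' = 0"
    using MD[OF ve ve' q m pre] lo hi d hiV_loV[OF vQ_shQ[OF q, of m]] by simp
  then show ?thesis by simp
qed

lemma close_prefix:
  assumes ve: "valid_digits Q e" and vd: "valid_digits Q d" and q: "vQ Q"
    and agree: "\<forall>k. 1 \<le> k \<and> k \<le> N \<longrightarrow> e k = d k"
  shows "\<bar>negaQ Q e - negaQ Q d\<bar> \<le> 1 / prodQ Q N"
proof -
  have s: "(\<Sum>k<N. tm Q e k) = (\<Sum>k<N. tm Q d k)"
    by (rule sum.cong) (use agree in \<open>auto simp: tm_def\<close>)
  let ?Q = "shQ N Q"
  have q': "vQ ?Q" by (rule vQ_shQ[OF q])
  have b1: "loV ?Q \<le> negaQ ?Q (shQ N e)" "negaQ ?Q (shQ N e) \<le> hiV ?Q"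
    using ge_loV(1)[OF valid_shQ[OF ve] q'] le_hiV(1)[OF valid_shQ[OF ve] q'] by auto
  have b2: "loV ?Q \<le> negaQ ?Q (shQ N d)" "negaQ ?Q (shQ N d) \<le> hiV ?Q"
    using ge_loV(1)[OF valid_shQ[OF vd] q'] le_hiV(1)[OF valid_shQ[OF vd] q'] by auto
  have w: "\<bar>negaQ ?Q (shQ N e) - negaQ ?Q (shQ N d)\<bar> \<le> 1"
    using b1 b2 hiV_loV[OF q'] by linarith
  have p: "prodQ Q N > 0" by (rule prodQ_pos[OF q])
  have "negaQ Q e - negaQ Q d = (-1)^N / prodQ Q N * (negaQ ?Q (shQ N e) - negaQ ?Q (shQ N d))"
    using negaQ_split[OF ve q, of N] negaQ_split[OF vd q, of N] s by (simp add: right_diff_distrib)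
  then have "\<bar>negaQ Q e - negaQ Q d\<bar> = \<bar>negaQ ?Q (shQ N e) - negaQ ?Q (shQ N d)\<bar> / prodQ Q N"
    using p by (simp add: abs_mult power_abs)
  also have "\<dots> \<le> 1 / prodQ Q N" using w p by (simp add: divide_right_mono)
  finally show ?thesis .
qed

lemma disjoint:
  assumes q: "vQ Q" and ve0: "valid_digits Q e0"
    and r1: "rational_pair Q e e' m" and r2: "rational_pair Q e0 e m'"
  shows False
proof -
  have em: "1 \<le> e m" and m: "1 \<le> m"
    and t1: "\<forall>j. e (m+2*j+1) = Q (m+2*j+1) - 1 \<and> e (m+2*j+2) = 0"
    using r1 unfolding rational_pair_def by auto
  have m': "1 \<le> m'" and em': "e m' = e0 m' - 1"
    and t2: "\<forall>j. e (m'+2*j+1) = 0 \<and> e (m'+2*j+2) = Q (m'+2*j+2) - 1"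
    using r2 unfolding rational_pair_def by auto
  have Qg: "\<And>k. 1 \<le> k \<Longrightarrow> 2 \<le> Q k" using q by (simp add: vQ_def)
  have lt0: "e0 m' < Q m'" using ve0 m' by (simp add: valid_digits_def)
  show False
  proof (cases "m \<le> m'")
    case True
    then obtain d where d: "m' = m + d" using le_Suc_ex by blast
    show False
    proof (cases "even d")
      case True
      then obtain j where "d = 2*j" by blast
      then have "e (m'+2*0+1) = e (m+2*j+1)" using d by simp
      moreover have "e (m'+2*0+1) = 0" using t2 by blast
      moreover have "e (m+2*j+1) = Q (m+2*j+1) - 1" using t1 by blast
      ultimately have "0 = Q (m+2*j+1) - 1" by simp
      moreover have "2 \<le> Q (m+2*j+1)" using Qg by simp
      ultimately show False by simp
    next
      case False
      then obtain j where "d = 2*j+1" by (metis oddE)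
      then have "e m' = Q m' - 1" using t1 d by (simp add: add.assoc)
      then show False using em' lt0 Qg[OF m'] by simp
    qed
  next
    case False
    then have "m' < m" by simp
    then obtain d where d: "m = m' + d" "d \<ge> 1" by (metis le_add_diff_inverse less_imp_le_nat
          zero_less_diff less_one not_le)
    show False
    proof (cases "even d")
      case False
      then obtain j where "d = 2*j+1" by (metis oddE)
      then have "e m = 0" using t2 d by (simp add: add.assoc)
      then show False using em by simp
    next
      case True
      then obtain j where j: "d = 2*j+2" using even_ge1[OF _ d(2)] by blast
      have "e (m+2*0+1) = e (m'+2*(j+1)+1)" using d j by (simp add: algebra_simps)
      moreover have "e (m+2*0+1) = Q (m+2*0+1) - 1" using t1 by blast
      moreover have "e (m'+2*(j+1)+1) = 0" using t2 by blast
      ultimately have "Q (m+2*0+1) - 1 = 0" by simp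
      moreover have "2 \<le> Q (m+2*0+1)" using Qg by simp
      ultimately show False by simp
    qed
  qed
qed

lemma uniq_pair:
  assumes ve: "valid_digits Q e" and vd: "valid_digits Q d" and q: "vQ Q" and n: "1 \<le> n"
    and agree: "\<forall>k. 1 \<le> k \<and> k < n \<longrightarrow> e k = d k" and lt: "d n < e n"
    and eq: "negaQ Q e = negaQ Q d"
  shows "rational_pair Q e d n"
proof -
  let ?Q = "shQ n Q"
  have q': "vQ ?Q" by (rule vQ_shQ[OF q])
  let ?Se = "negaQ ?Q (shQ n e)" and ?Sd = "negaQ ?Q (shQ n d)"
  have b1: "loV ?Q \<le> ?Se" "?Sd \<le> hiV ?Q"
    using ge_loV(1)[OF valid_shQ[OF ve] q'] le_hiV(1)[OF valid_shQ[OF vd] q'] by auto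
  have p: "prodQ Q n \<noteq> 0" using prodQ_pos[OF q, of n] by linarith
  have "(-1)^n / prodQ Q n * ((real (e n) - real (d n)) + (?Se - ?Sd)) = 0"
    using MD[OF ve vd q n agree] eq by simp
  then have z: "(real (e n) - real (d n)) + (?Se - ?Sd) = 0" using p by simp
  have l: "real (e n) - real (d n) \<ge> 1" using lt by linarith
  have w: "hiV ?Q - loV ?Q = 1" by (rule hiV_loV[OF q'])
  have dd: "real (e n) - real (d n) = 1" and se: "?Se = loV ?Q" and sd: "?Sd = hiV ?Q"
    using z l b1 w by linarith+
  have en: "e n = d n + 1" using dd by linarith
  have te: "\<forall>i\<ge>1. shQ n e i = loS ?Q i" using ge_loV(2)[OF valid_shQ[OF ve] q'] se by simp
  have td: "\<forall>i\<ge>1. shQ n d i = hiS ?Q i" using le_hiV(2)[OF valid_shQ[OF vd] q'] sd by simp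
  show ?thesis unfolding rational_pair_def
    using n en agree te[folded tails_lo] td[folded tails_hi] by auto
qed

lemma uniqueness:
  assumes ue: "used_repr Q e" and ud: "used_repr Q d" and q: "vQ Q"
    and eq: "negaQ Q e = negaQ Q d"
  shows "e = d"
proof (rule ccontr)
  assume ne: "e \<noteq> d"
  then have ex: "\<exists>k. e k \<noteq> d k" by auto
  define n where "n = (LEAST k. e k \<noteq> d k)"
  have nn: "e n \<noteq> d n" unfolding n_def by (rule LeastI_ex[OF ex])
  have below: "\<And>k. k < n \<Longrightarrow> e k = d k" unfolding n_def using not_less_Least by blast
  have ve: "valid_digits Q e" and vd: "valid_digits Q d" and z: "e 0 = 0" "d 0 = 0"
    using ue ud unfolding used_repr_def by auto
  have n1: "1 \<le> n" using nn z by (cases n) auto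
  have agree: "\<forall>k. 1 \<le> k \<and> k < n \<longrightarrow> e k = d k" using below by auto
  show False
  proof (cases "d n < e n")
    case True
    have "rational_pair Q e d n" by (rule uniq_pair[OF ve vd q n1 agree True eq])
    then show False using ud ve unfolding used_repr_def by blast
  next
    case False
    then have lt: "e n < d n" using nn by simp
    have "rational_pair Q d e n"
      by (rule uniq_pair[OF vd ve q n1 _ lt eq[symmetric]]) (use agree in auto)
    then show False using ue vd unfolding used_repr_def by blast
  qed
qed



lemma first_digit:
  assumes ve: "valid_digits Q e" and q: "vQ Q"
  shows "negaQ Q e = - (real (e 1) + negaQ (shQ 1 Q) (shQ 1 e)) / real (Q 1)"
proof -
  have p: "prodQ Q 1 = real (Q 1)" by (simp add: prodQ_def)
  have "negaQ Q e = tm Q e 0 + (-1) / prodQ Q 1 * negaQ (shQ 1 Q) (shQ 1 e)"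
    using negaQ_split[OF ve q, of 1] by simp
  also have "tm Q e 0 = - real (e 1) / real (Q 1)"
  proof -
    have p': "prodQ Q (Suc 0) = real (Q (Suc 0))" by (simp add: prodQ_def)
    show ?thesis by (simp add: tm_def p')
  qed
  finally show ?thesis unfolding p by (simp add: add_divide_distrib diff_divide_distrib)
qed

lemma sh_hiS: "shQ 1 (hiS Q) = loS (shQ 1 Q)"
  by (rule ext) (simp add: shQ_def hiS_def loS_def)

lemma sh_loS: "shQ 1 (loS Q) = hiS (shQ 1 Q)"
  by (rule ext) (simp add: shQ_def hiS_def loS_def)

lemma hiV_rec: "vQ Q \<Longrightarrow> hiV Q = - loV (shQ 1 Q) / real (Q 1)"
  unfolding hiV_def loV_def
  by (subst first_digit[OF valid_hiS]) (simp_all add: sh_hiS[simplified] hiS_def)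

lemma loV_rec: "vQ Q \<Longrightarrow> loV Q = - ((real (Q 1) - 1) + hiV (shQ 1 Q)) / real (Q 1)"
proof -
  assume q: "vQ Q"
  have "Q 1 \<ge> 2" using q by (simp add: vQ_def)
  then have r: "real (Q (Suc 0) - Suc 0) = real (Q (Suc 0)) - 1" by simp
  show ?thesis unfolding hiV_def loV_def
    by (subst first_digit[OF valid_loS[OF q] q]) (simp add: sh_loS[simplified] loS_def r)
qed

definition dig :: "(nat \<Rightarrow> nat) \<Rightarrow> real \<Rightarrow> nat" where
  "dig Q x = nat \<lceil>- real (Q 1) * x - hiV (shQ 1 Q)\<rceil>"

lemma dig_step:
  assumes q: "vQ Q" and lo: "loV Q \<le> x" and hi: "x \<le> hiV Q"
  shows "dig Q x < Q 1" "loV (shQ 1 Q) \<le> - real (Q 1) * x - real (dig Q x)"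
    "- real (Q 1) * x - real (dig Q x) \<le> hiV (shQ 1 Q)"
proof -
  let ?h = "hiV (shQ 1 Q)" and ?l = "loV (shQ 1 Q)" and ?q = "real (Q 1)"
  have q1: "?q \<ge> 2" using q by (simp add: vQ_def)
  have w: "?h - ?l = 1" by (rule hiV_loV[OF vQ_shQ[OF q]])
  define y where "y = - ?q * x - ?h"
  have h1: "x \<le> - ?l / ?q" using hi hiV_rec[OF q] by simp
  have "x * ?q \<le> (- ?l / ?q) * ?q" by (rule mult_right_mono[OF h1]) (use q1 in simp)
  then have "x * ?q \<le> - ?l" using q1 by simp
  then have y1: "y \<ge> -1" unfolding y_def using w by (simp add: algebra_simps)
  have "x \<ge> - ((?q - 1) + ?h) / ?q" using lo loV_rec[OF q] by simp
  then have "x * ?q \<ge> - ((?q - 1) + ?h)" using q1 by (simp add: divide_le_eq)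
  then have y2: "y \<le> ?q - 1" unfolding y_def by (simp add: algebra_simps)
  have dd: "dig Q x = nat \<lceil>y\<rceil>" unfolding dig_def y_def by simp
  have "y \<le> real_of_int (int (Q 1) - 1)" using y2 by simp
  then have c1: "\<lceil>y\<rceil> \<le> int (Q 1) - 1" by (rule ceiling_le)
  show "dig Q x < Q 1" unfolding dd using c1 q1 by linarith
  have e: "- ?q * x - real (dig Q x) = y + ?h - real (dig Q x)" unfolding y_def by simp
  show "?l \<le> - ?q * x - real (dig Q x)" "- ?q * x - real (dig Q x) \<le> ?h"
  proof -
    have "?l \<le> y + ?h - real (dig Q x) \<and> y + ?h - real (dig Q x) \<le> ?h"
    proof (cases "\<lceil>y\<rceil> \<ge> 0")
      case True
      then have "real (dig Q x) = real_of_int \<lceil>y\<rceil>" unfolding dd by simp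
      moreover have "y \<le> real_of_int \<lceil>y\<rceil>" "real_of_int \<lceil>y\<rceil> < y + 1" by linarith+
      ultimately show ?thesis using w by linarith
    next
      case False
      then have "dig Q x = 0" unfolding dd by simp
      moreover have "y \<le> -1" using False by linarith
      ultimately show ?thesis using y1 w by simp
    qed
    then show "?l \<le> - ?q * x - real (dig Q x)" "- ?q * x - real (dig Q x) \<le> ?h" using e by simp_all
  qed
qed



fun xsq :: "(nat \<Rightarrow> nat) \<Rightarrow> real \<Rightarrow> nat \<Rightarrow> real" where
  "xsq Q x 0 = x"
| "xsq Q x (Suc n) = - real (Q (Suc n)) * xsq Q x n - real (dig (shQ n Q) (xsq Q x n))"

definition dgs :: "(nat \<Rightarrow> nat) \<Rightarrow> real \<Rightarrow> nat \<Rightarrow> nat" where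
  "dgs Q x k = (if k = 0 then 0 else dig (shQ (k - 1) Q) (xsq Q x (k - 1)))"

lemma shQ_1: "shQ n Q (Suc 0) = Q (Suc n)"
  by (simp add: shQ_def)

lemma xsq_bounds:
  assumes q: "vQ Q" and lo: "loV Q \<le> x" and hi: "x \<le> hiV Q"
  shows "loV (shQ n Q) \<le> xsq Q x n \<and> xsq Q x n \<le> hiV (shQ n Q)"
proof (induction n)
  case 0 then show ?case using lo hi by simp
next
  case (Suc n)
  have q': "vQ (shQ n Q)" by (rule vQ_shQ[OF q])
  have s: "shQ 1 (shQ n Q) = shQ (Suc n) Q" by (simp add: shQ_shQ)
  show ?case using dig_step(2,3)[OF q' conjunct1[OF Suc.IH] conjunct2[OF Suc.IH]]
    by (simp add: s[simplified] shQ_1)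
qed

lemma dgs_valid:
  assumes q: "vQ Q" and lo: "loV Q \<le> x" and hi: "x \<le> hiV Q"
  shows "valid_digits Q (dgs Q x)"
  unfolding valid_digits_def
proof (intro allI impI)
  fix k :: nat assume k: "1 \<le> k"
  then obtain n where n: "k = Suc n" by (cases k) auto
  have q': "vQ (shQ n Q)" by (rule vQ_shQ[OF q])
  have b: "loV (shQ n Q) \<le> xsq Q x n" "xsq Q x n \<le> hiV (shQ n Q)" using xsq_bounds[OF q lo hi] by auto
  show "dgs Q x k < Q k" using dig_step(1)[OF q' b] n by (simp add: dgs_def shQ_1)
qed

lemma telescope_xsq:
  assumes q: "vQ Q"
  shows "x = (\<Sum>k<n. tm Q (dgs Q x) k) + (-1)^n / prodQ Q n * xsq Q x n"
proof (induction n)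
  case 0 then show ?case by simp
next
  case (Suc n)
  have p: "prodQ Q n > 0" by (rule prodQ_pos[OF q])
  have qq: "real (Q (Suc n)) > 0" using q[unfolded vQ_def, rule_format, of "Suc n"] by simp
  define s :: real where "s = (-1)^n"
  define P where "P = prodQ Q n"
  define R where "R = real (Q (Suc n))"
  define c where "c = real (dgs Q x (Suc n))"
  define X where "X = xsq Q x n"
  have key: "s / P * X = - s * c / (P * R) + (- s) / (P * R) * (- R * X - c)"
    using p qq unfolding P_def R_def by (simp add: field_simps)
  have t: "tm Q (dgs Q x) n = - s * c / (P * R)"
    unfolding tm_def s_def c_def P_def R_def by (simp add: prodQ_Suc)
  have xs: "xsq Q x (Suc n) = - R * X - c"
    unfolding R_def X_def c_def by (simp add: dgs_def)
  have "(-1)^n / prodQ Q n * xsq Q x n = tm Q (dgs Q x) n + (-1)^Suc n / prodQ Q (Suc n) * xsq Q x (Suc n)"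
    using key unfolding t xs by (simp add: s_def P_def R_def X_def prodQ_Suc)
  then show ?case using Suc.IH by simp
qed

lemma existence:
  assumes q: "vQ Q" and lo: "loV Q \<le> x" and hi: "x \<le> hiV Q"
  shows "valid_digits Q (dgs Q x) \<and> negaQ Q (dgs Q x) = x"
proof
  show v: "valid_digits Q (dgs Q x)" by (rule dgs_valid[OF q lo hi])
  define r where "r n = (-1)^n / prodQ Q n * xsq Q x n" for n
  have r0: "r \<longlonglongrightarrow> 0"
  proof (rule Lim_null_comparison[of _ "\<lambda>n. (1/2) ^ n"])
    show "\<forall>\<^sub>F n in sequentially. norm (r n) \<le> (1/2) ^ n"
    proof (rule always_eventually, rule allI)
      fix n
      have q': "vQ (shQ n Q)" by (rule vQ_shQ[OF q])
      have b: "\<bar>xsq Q x n\<bar> \<le> 1" using xsq_bounds[OF q lo hi, of n] hiV_bounds[OF q'] hiV_loV[OF q']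
        by linarith
      have p: "prodQ Q n \<ge> 2^n" by (rule prodQ_ge[OF q])
      have p0: "(0::real) < 2^n" by simp
      have pp: "prodQ Q n > 0" by (rule prodQ_pos[OF q])
      have "norm (r n) = \<bar>xsq Q x n\<bar> / prodQ Q n" unfolding r_def using pp
        by (simp add: abs_mult power_abs)
      also have "\<dots> \<le> 1 / prodQ Q n" using b pp by (rule divide_right_mono[OF _ less_imp_le])
      also have "\<dots> \<le> 1 / 2^n" using p p0 by (intro frac_le) auto
      finally show "norm (r n) \<le> (1/2) ^ n" by (simp add: power_one_over)
    qed
    show "(\<lambda>n. (1/2::real) ^ n) \<longlonglongrightarrow> 0" by (rule LIMSEQ_power_zero) auto
  qed
  have eqf: "(\<lambda>n. \<Sum>k<n. tm Q (dgs Q x) k) = (\<lambda>n. x - r n)"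
  proof
    fix n
    show "(\<Sum>k<n. tm Q (dgs Q x) k) = x - r n"
      using telescope_xsq[OF q, of x n] unfolding r_def by linarith
  qed
  have "(\<lambda>n. x - r n) \<longlonglongrightarrow> x - 0" by (rule tendsto_diff[OF tendsto_const r0])
  then have l1: "(\<lambda>n. \<Sum>k<n. tm Q (dgs Q x) k) \<longlonglongrightarrow> x" unfolding eqf by simp
  have l2: "(\<lambda>n. \<Sum>k<n. tm Q (dgs Q x) k) \<longlonglongrightarrow> negaQ Q (dgs Q x)"
    unfolding negaQ_tm by (rule summable_LIMSEQ[OF summable_tm[OF v q]])
  show "negaQ Q (dgs Q x) = x" by (rule LIMSEQ_unique[OF l2 l1])
qed

lemma rp_cong0: "rational_pair Q e1 e m \<Longrightarrow> rational_pair Q (e1(0 := a)) e m"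
  unfolding rational_pair_def by auto

lemma valid_upd0: "valid_digits Q e \<Longrightarrow> valid_digits Q (e(0 := a))"
  unfolding valid_digits_def by auto

lemma negaQ_upd0: "negaQ Q (e(0 := a)) = negaQ Q e"
  by (rule negaQ_cong) auto

lemma first_used:
  assumes q: "vQ Q" and v: "valid_digits Q e" and r: "rational_pair Q e e' m"
  shows "used_repr Q (e(0 := 0))"
  unfolding used_repr_def
proof (intro conjI)
  show "valid_digits Q (e(0 := 0))" by (rule valid_upd0[OF v])
  show "(e(0 := 0)) 0 = 0" by simp
  show "\<not> (\<exists>e0 m'. valid_digits Q e0 \<and> rational_pair Q e0 (e(0 := 0)) m')"
  proof
    assume "\<exists>e0 m'. valid_digits Q e0 \<and> rational_pair Q e0 (e(0 := 0)) m'"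
    then obtain e0 m' where v0: "valid_digits Q e0" and r0: "rational_pair Q e0 (e(0 := 0)) m'" by blast
    have r1: "rational_pair Q (e(0 := 0)) e' m" by (rule rp_cong0[OF r])
    show False by (rule disjoint[OF q v0 r1 r0])
  qed
qed

lemma used_existence:
  assumes q: "vQ Q" and lo: "loV Q \<le> x" and hi: "x \<le> hiV Q"
  shows "\<exists>e. used_repr Q e \<and> negaQ Q e = x"
proof -
  define e where "e = dgs Q x"
  have v: "valid_digits Q e" and ex: "negaQ Q e = x" using existence[OF q lo hi] unfolding e_def by auto
  define e0 where "e0 = e(0 := 0)"
  have v0: "valid_digits Q e0" unfolding e0_def by (rule valid_upd0[OF v])
  have x0: "negaQ Q e0 = x" unfolding e0_def negaQ_upd0 by (rule ex)
  show ?thesis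
  proof (cases "\<exists>e1 m. valid_digits Q e1 \<and> rational_pair Q e1 e0 m")
    case True
    then obtain e1 m where v1: "valid_digits Q e1" and r1: "rational_pair Q e1 e0 m" by blast
    have u: "used_repr Q (e1(0 := 0))" by (rule first_used[OF q v1 r1])
    have "negaQ Q e1 = negaQ Q e0" by (rule pair_value[OF v1 v0 q r1])
    then have "negaQ Q (e1(0 := 0)) = x" unfolding negaQ_upd0 using x0 by simp
    then show ?thesis using u by blast
  next
    case False
    have "e0 0 = 0" unfolding e0_def by simp
    then have "used_repr Q e0" using v0 False unfolding used_repr_def by blast
    then show ?thesis using x0 by blast
  qed
qed

lemma fmap_eval:
  assumes q: "vQ Q" and u: "used_repr Q e"
  shows "fmap Q q' (negaQ Q e) = negaq q' e"
proof -
  have "(THE d. used_repr Q d \<and> negaQ Q d = negaQ Q e) = e"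
  proof (rule the_equality)
    show "used_repr Q e \<and> negaQ Q e = negaQ Q e" using u by simp
    show "d = e" if "used_repr Q d \<and> negaQ Q d = negaQ Q e" for d
      using uniqueness[OF _ u q, of d] that by blast
  qed
  then show ?thesis unfolding fmap_def by simp
qed



lemma negaq_eq: "negaq q a = negaQ (\<lambda>_. q) a"
proof -
  have "real (a (Suc n)) / (- real q) ^ Suc n =
        (-1) ^ Suc n * real (a (Suc n)) / prodQ (\<lambda>_. q) (Suc n)" for n
  proof -
    have p: "prodQ (\<lambda>_. q) (Suc n) = real q ^ Suc n" by (simp add: prodQ_def)
    have m: "(- real q) ^ Suc n = (-1) ^ Suc n * real q ^ Suc n" by (rule power_minus)
    show ?thesis unfolding p m by (cases "even n") auto
  qed
  then show ?thesis unfolding negaq_def negaQ_def by simp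
qed

lemma vQ_const: "2 \<le> q \<Longrightarrow> vQ (\<lambda>_. q)"
  by (simp add: vQ_def)

lemma valid_const: "valid_digits Q e \<Longrightarrow> \<forall>k\<ge>1. Q k \<le> q \<Longrightarrow> valid_digits (\<lambda>_. q) e"
  unfolding valid_digits_def by (meson less_le_trans)

lemma shQ_const: "shQ n (\<lambda>_. q) = (\<lambda>_. q)"
  by (rule ext) (simp add: shQ_def)

lemma S_eq: "vQ Q \<Longrightarrow> {a0 Q - 1..a0 Q} = {loV Q..hiV Q}"
  using a0_hiV[of Q] hiV_loV[of Q] by (simp add: algebra_simps)

lemma in_S: "vQ Q \<Longrightarrow> valid_digits Q e \<Longrightarrow> negaQ Q e \<in> {loV Q..hiV Q}"
  using ge_loV(1) le_hiV(1) by auto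

lemma part2_id:
  assumes q: "vQ Q" and c: "\<forall>n\<ge>1. Q n = q" and x: "x \<in> {loV Q..hiV Q}"
  shows "fmap Q q x = x"
proof -
  obtain e where u: "used_repr Q e" and ex: "negaQ Q e = x"
    using used_existence[OF q] x by auto
  have "fmap Q q x = negaq q e" using fmap_eval[OF q u] ex by simp
  also have "\<dots> = negaQ (\<lambda>_. q) e" by (rule negaq_eq)
  also have "\<dots> = negaQ Q e" by (rule negaQ_congQ) (use c in auto)
  finally show ?thesis using ex by simp
qed

lemma part2:
  assumes q: "vQ Q" and c: "\<forall>n\<ge>1. Q n = q" and x: "x \<in> {a0 Q - 1..a0 Q}"
  shows "continuous (at x within {a0 Q - 1..a0 Q}) (fmap Q q)"
  unfolding continuous_within_eps_delta
proof (intro allI impI)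
  fix \<epsilon> :: real assume e: "\<epsilon> > 0"
  show "\<exists>\<delta>>0. \<forall>x'\<in>{a0 Q - 1..a0 Q}. dist x' x < \<delta> \<longrightarrow> dist (fmap Q q x') (fmap Q q x) < \<epsilon>"
  proof (intro exI conjI ballI impI)
    show "\<epsilon> > 0" by (rule e)
    fix y assume y: "y \<in> {a0 Q - 1..a0 Q}" and d: "dist y x < \<epsilon>"
    have "fmap Q q y = y" "fmap Q q x = x" using part2_id[OF q c] x y S_eq[OF q] by auto
    then show "dist (fmap Q q y) (fmap Q q x) < \<epsilon>" using d by simp
  qed
qed



definition Sn where "Sn Q e n = negaQ (shQ n Q) (shQ n e)"

definition gsep :: "(nat \<Rightarrow> nat) \<Rightarrow> (nat \<Rightarrow> nat) \<Rightarrow> nat \<Rightarrow> real" where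
  "gsep Q e n = (1 / prodQ Q n) *
     min (if 1 \<le> e n then Sn Q e n - loV (shQ n Q) else 1)
         (if e n + 1 < Q n then hiV (shQ n Q) - Sn Q e n else 1)"

lemma caseA:
  assumes q: "vQ Q" and v: "valid_digits Q e" and n: "1 \<le> n" and en: "1 \<le> e n"
    and S: "Sn Q e n = loV (shQ n Q)"
  shows "negaQ_rational Q (negaQ Q e)"
proof -
  have q': "vQ (shQ n Q)" by (rule vQ_shQ[OF q])
  have te: "\<forall>i\<ge>1. shQ n e i = loS (shQ n Q) i"
    using ge_loV(2)[OF valid_shQ[OF v] q'] S unfolding Sn_def by simp
  define e' where "e' k = (if k < n then e k else if k = n then e n - 1 else hiS (shQ n Q) (k - n))" for k
  have ve': "valid_digits Q e'" unfolding valid_digits_def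
  proof (intro allI impI)
    fix k :: nat assume k: "1 \<le> k"
    show "e' k < Q k"
    proof (cases "k < n")
      case True then show ?thesis using v k by (simp add: e'_def valid_digits_def)
    next
      case False
      show ?thesis
      proof (cases "k = n")
        case True then show ?thesis using v k by (simp add: e'_def valid_digits_def less_imp_diff_less)
      next
        case False2: False
        then have "1 \<le> k - n" using False by simp
        then have "hiS (shQ n Q) (k - n) < shQ n Q (k - n)"
          using valid_hiS[OF q'] unfolding valid_digits_def by blast
        then show ?thesis using False False2 by (simp add: e'_def shQ_def)
      qed
    qed
  qed
  have te': "\<forall>i\<ge>1. shQ n e' i = hiS (shQ n Q) i"
    by (simp add: e'_def shQ_def)
  have rp: "rational_pair Q e e' n" unfolding rational_pair_def
    using n en te[folded tails_lo] te'[folded tails_hi] by (simp add: e'_def)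
  have "negaQ Q e = negaQ Q e'" by (rule pair_value[OF v ve' q rp])
  then show ?thesis unfolding negaQ_rational_def using v ve' rp by metis
qed

lemma caseB:
  assumes q: "vQ Q" and v: "valid_digits Q e" and n: "1 \<le> n" and en: "e n + 1 < Q n"
    and S: "Sn Q e n = hiV (shQ n Q)"
  shows "\<exists>e''. valid_digits Q e'' \<and> rational_pair Q e'' e n"
proof -
  have q': "vQ (shQ n Q)" by (rule vQ_shQ[OF q])
  have te: "\<forall>i\<ge>1. shQ n e i = hiS (shQ n Q) i"
    using le_hiV(2)[OF valid_shQ[OF v] q'] S unfolding Sn_def by simp
  define e' where "e' k = (if k < n then e k else if k = n then e n + 1 else loS (shQ n Q) (k - n))" for k
  have ve': "valid_digits Q e'" unfolding valid_digits_def
  proof (intro allI impI)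
    fix k :: nat assume k: "1 \<le> k"
    show "e' k < Q k"
    proof (cases "k < n")
      case True then show ?thesis using v k by (simp add: e'_def valid_digits_def)
    next
      case False
      show ?thesis
      proof (cases "k = n")
        case True then show ?thesis using en by (simp add: e'_def)
      next
        case False2: False
        then have "1 \<le> k - n" using False by simp
        then have "loS (shQ n Q) (k - n) < shQ n Q (k - n)"
          using valid_loS[OF q'] unfolding valid_digits_def by blast
        then show ?thesis using False False2 by (simp add: e'_def shQ_def)
      qed
    qed
  qed
  have te': "\<forall>i\<ge>1. shQ n e' i = loS (shQ n Q) i"
    by (simp add: e'_def shQ_def)
  have rp: "rational_pair Q e' e n" unfolding rational_pair_def
    using n te'[folded tails_lo] te[folded tails_hi] by (simp add: e'_def)
  then show ?thesis using ve' by blast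
qed

lemma gsep_pos:
  assumes q: "vQ Q" and u: "used_repr Q e" and nr: "\<not> negaQ_rational Q (negaQ Q e)" and n: "1 \<le> n"
  shows "gsep Q e n > 0"
proof -
  have v: "valid_digits Q e" using u by (simp add: used_repr_def)
  have q': "vQ (shQ n Q)" by (rule vQ_shQ[OF q])
  have b1: "loV (shQ n Q) \<le> Sn Q e n" "Sn Q e n \<le> hiV (shQ n Q)"
    unfolding Sn_def using ge_loV(1)[OF valid_shQ[OF v] q'] le_hiV(1)[OF valid_shQ[OF v] q'] by auto
  have a: "(if 1 \<le> e n then Sn Q e n - loV (shQ n Q) else 1) > 0"
  proof (cases "1 \<le> e n")
    case True
    have "Sn Q e n \<noteq> loV (shQ n Q)" using caseA[OF q v n True] nr by blast
    then show ?thesis using True b1 by simp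
  qed simp
  have b: "(if e n + 1 < Q n then hiV (shQ n Q) - Sn Q e n else 1) > 0"
  proof (cases "e n + 1 < Q n")
    case True
    have "Sn Q e n \<noteq> hiV (shQ n Q)" using caseB[OF q v n True] u unfolding used_repr_def by blast
    then show ?thesis using True b1 by simp
  qed simp
  have p: "prodQ Q n > 0" by (rule prodQ_pos[OF q])
  show ?thesis unfolding gsep_def using a b p by simp
qed

lemma separation:
  assumes q: "vQ Q" and ve: "valid_digits Q e" and vd: "valid_digits Q d" and n: "1 \<le> n"
    and agree: "\<forall>k. 1 \<le> k \<and> k < n \<longrightarrow> e k = d k" and ne: "d n \<noteq> e n"
  shows "gsep Q e n \<le> \<bar>negaQ Q d - negaQ Q e\<bar>"
proof -
  let ?Q = "shQ n Q"
  have q': "vQ ?Q" by (rule vQ_shQ[OF q])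
  let ?Se = "Sn Q e n" and ?Sd = "negaQ ?Q (shQ n d)"
  have b1: "loV ?Q \<le> ?Se" "?Se \<le> hiV ?Q"
    unfolding Sn_def using ge_loV(1)[OF valid_shQ[OF ve] q'] le_hiV(1)[OF valid_shQ[OF ve] q'] by auto
  have b2: "loV ?Q \<le> ?Sd" "?Sd \<le> hiV ?Q"
    using ge_loV(1)[OF valid_shQ[OF vd] q'] le_hiV(1)[OF valid_shQ[OF vd] q'] by auto
  have w: "hiV ?Q - loV ?Q = 1" by (rule hiV_loV[OF q'])
  have p: "prodQ Q n > 0" by (rule prodQ_pos[OF q])
  define D where "D = (real (e n) - real (d n)) + (?Se - ?Sd)"
  have "negaQ Q e - negaQ Q d = (-1)^n / prodQ Q n * D"
    unfolding D_def Sn_def by (rule MD[OF ve vd q n agree])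
  then have "\<bar>negaQ Q e - negaQ Q d\<bar> = \<bar>D\<bar> / prodQ Q n"
    using p by (simp add: abs_mult abs_divide power_abs)
  then have abs: "\<bar>negaQ Q d - negaQ Q e\<bar> = \<bar>D\<bar> / prodQ Q n"
    by (simp add: abs_minus_commute)
  define M where "M = min (if 1 \<le> e n then ?Se - loV ?Q else 1)
         (if e n + 1 < Q n then hiV ?Q - ?Se else 1)"
  have MD': "M \<le> \<bar>D\<bar>"
  proof (cases "d n < e n")
    case True
    then have "1 \<le> e n" by simp
    then have "M \<le> ?Se - loV ?Q" unfolding M_def by simp
    moreover have "real (e n) - real (d n) \<ge> 1" using True by linarith
    ultimately show ?thesis unfolding D_def using b2 w by linarith
  next
    case False
    then have lt: "e n < d n" using ne by simp
    have "d n < Q n" using vd n by (simp add: valid_digits_def)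
    then have "e n + 1 < Q n \<or> e n + 1 = Q n" using lt by linarith
    then have "e n + 1 < Q n" using lt \<open>d n < Q n\<close> by linarith
    then have "M \<le> hiV ?Q - ?Se" unfolding M_def by simp
    moreover have "real (e n) - real (d n) \<le> -1" using lt by linarith
    ultimately show ?thesis unfolding D_def using b2 w by linarith
  qed
  have "gsep Q e n = M / prodQ Q n" unfolding gsep_def M_def by simp
  also have "\<dots> \<le> \<bar>D\<bar> / prodQ Q n" using MD' p by (simp add: divide_right_mono)
  finally show ?thesis using abs by simp
qed

lemma part1:
  assumes q: "vQ Q" and Qle: "\<forall>k\<ge>1. Q k \<le> q" and q2: "2 \<le> q"
    and x: "x0 \<in> {a0 Q - 1..a0 Q}" and nr: "\<not> negaQ_rational Q x0"
  shows "continuous (at x0 within {a0 Q - 1..a0 Q}) (fmap Q q)"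
  unfolding continuous_within_eps_delta
proof (intro allI impI)
  fix \<epsilon> :: real assume ep: "\<epsilon> > 0"
  obtain e where u: "used_repr Q e" and ex: "negaQ Q e = x0"
    using used_existence[OF q] x S_eq[OF q] by auto
  have ve: "valid_digits Q e" using u by (simp add: used_repr_def)
  have nr': "\<not> negaQ_rational Q (negaQ Q e)" using nr ex by simp
  obtain N where N: "(1/2::real) ^ N < \<epsilon>" using real_arch_pow_inv[OF ep, of "1/2"] by auto
  define A where "A = insert 1 (gsep Q e ` {1..N})"
  define \<delta> where "\<delta> = Min A"
  have fA: "finite A" "A \<noteq> {}" unfolding A_def by auto
  have Apos: "\<forall>a\<in>A. 0 < a" unfolding A_def using gsep_pos[OF q u nr'] by auto
  have dpos: "\<delta> > 0" unfolding \<delta>_def using Min_gr_iff[OF fA] Apos by blast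
  have dle: "\<delta> \<le> gsep Q e n" if "n \<in> {1..N}" for n
    unfolding \<delta>_def A_def using that by (intro Min_le) auto
  show "\<exists>\<delta>>0. \<forall>y\<in>{a0 Q - 1..a0 Q}. dist y x0 < \<delta> \<longrightarrow> dist (fmap Q q y) (fmap Q q x0) < \<epsilon>"
  proof (intro exI conjI ballI impI)
    show "\<delta> > 0" by (rule dpos)
    fix y assume y: "y \<in> {a0 Q - 1..a0 Q}" and dy: "dist y x0 < \<delta>"
    obtain d where ud: "used_repr Q d" and dx: "negaQ Q d = y"
      using used_existence[OF q] y S_eq[OF q] by auto
    have vd: "valid_digits Q d" using ud by (simp add: used_repr_def)
    have agree: "\<forall>k. 1 \<le> k \<and> k \<le> N \<longrightarrow> e k = d k"
    proof (rule ccontr)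
      assume "\<not> (\<forall>k. 1 \<le> k \<and> k \<le> N \<longrightarrow> e k = d k)"
      then have ex1: "\<exists>k. 1 \<le> k \<and> k \<le> N \<and> d k \<noteq> e k" by auto
      define n where "n = (LEAST k. 1 \<le> k \<and> k \<le> N \<and> d k \<noteq> e k)"
      have nP: "1 \<le> n \<and> n \<le> N \<and> d n \<noteq> e n" unfolding n_def by (rule LeastI_ex[OF ex1])
      have below: "\<forall>k. 1 \<le> k \<and> k < n \<longrightarrow> e k = d k"
      proof (intro allI impI)
        fix k assume k: "1 \<le> k \<and> k < n"
        have "\<not> (1 \<le> k \<and> k \<le> N \<and> d k \<noteq> e k)" unfolding n_def
          by (rule not_less_Least) (use k n_def in simp)
        then show "e k = d k" using k nP by auto
      qed
      have "gsep Q e n \<le> \<bar>negaQ Q d - negaQ Q e\<bar>"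
        by (rule separation[OF q ve vd _ below]) (use nP in auto)
      moreover have "\<delta> \<le> gsep Q e n" using dle nP by auto
      ultimately have "\<delta> \<le> dist y x0" using dx ex by (simp add: dist_real_def)
      then show False using dy by simp
    qed
    have fy: "fmap Q q y = negaq q d" using fmap_eval[OF q ud] dx by simp
    have fx: "fmap Q q x0 = negaq q e" using fmap_eval[OF q u] ex by simp
    have qc: "vQ (\<lambda>_. q)" by (rule vQ_const[OF q2])
    have "\<bar>negaQ (\<lambda>_. q) e - negaQ (\<lambda>_. q) d\<bar> \<le> 1 / prodQ (\<lambda>_. q) N"
      by (rule close_prefix[OF valid_const[OF ve Qle] valid_const[OF vd Qle] qc agree])
    also have "\<dots> \<le> 1 / 2 ^ N"
      using prodQ_ge[OF qc, of N] by (intro frac_le) auto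
    also have "\<dots> < \<epsilon>" using N by (simp add: power_one_over)
    finally show "dist (fmap Q q y) (fmap Q q x0) < \<epsilon>"
      unfolding fy fx negaq_eq dist_real_def by (simp add: abs_minus_commute)
  qed
qed



lemma T_lt1:
  assumes q': "vQ Q'" and q2: "2 \<le> q" and le': "\<forall>k\<ge>1. Q' k \<le> q" and i: "Q' (Suc i) < q"
  shows "(\<Sum>k. (real (Q' (Suc k)) - 1) / prodQ (\<lambda>_. q) (Suc k)) < 1"
proof -
  let ?C = "\<lambda>_::nat. q"
  have qc: "vQ ?C" by (rule vQ_const[OF q2])
  define P where "P k = prodQ ?C (Suc k)" for k
  have p: "P k > 0" for k unfolding P_def by (rule prodQ_pos[OF qc])
  define g where "g k = (real (Q' (Suc k)) - 1) / P k" for k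
  define h where "h k = (real q - 1) / P k" for k
  have a1: "real (Q' (Suc k)) \<ge> 2" for k using q' unfolding vQ_def by simp
  have a2: "real (Q' (Suc k)) \<le> real q" for k using le' by simp
  have s1: "h sums 1" unfolding h_def P_def using sums_one[OF qc] by simp
  have gnn: "0 \<le> g k" for k unfolding g_def
    by (rule divide_nonneg_pos[OF _ p]) (use a1[of k] in linarith)
  have gh: "g k \<le> h k" for k unfolding g_def h_def
    by (rule divide_right_mono) (use a2[of k] p[of k] in auto)
  have s2: "summable g"
    by (rule summable_comparison_test[OF _ sums_summable[OF s1]]) (use gnn gh in auto)
  define f where "f k = h k - g k" for k
  have sf: "f sums (1 - suminf g)" unfolding f_def
    by (rule sums_diff[OF s1 summable_sums[OF s2]])
  have fnn: "0 \<le> f k" for k unfolding f_def using gh[of k] by linarith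
  have "f i = (real q - real (Q' (Suc i))) / P i" unfolding f_def g_def h_def
    by (simp add: diff_divide_distrib)
  moreover have "real q - real (Q' (Suc i)) > 0" using i by simp
  ultimately have fpos: "0 < f i" using p[of i] by simp
  have "0 < suminf f" by (rule suminf_pos2[OF sums_summable[OF sf] fnn fpos])
  then have "suminf g < 1" using sums_unique[OF sf] by linarith
  then show ?thesis unfolding g_def P_def .
qed



lemma diff_nonzero:
  assumes q: "vQ Q" and Qle: "\<forall>k\<ge>1. Q k \<le> q" and q2: "2 \<le> q"
    and v: "valid_digits Q eps" and v': "valid_digits Q eps'" and rp: "rational_pair Q eps eps' m"
    and nm: "n > m" and Qn: "Q n < q"
  shows "negaq q eps \<noteq> negaq q eps'"
proof -
  let ?C = "\<lambda>_::nat. q"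
  have qc: "vQ ?C" by (rule vQ_const[OF q2])
  have m: "1 \<le> m" and em: "1 \<le> eps m" and pre: "\<forall>k. 1 \<le> k \<and> k < m \<longrightarrow> eps k = eps' k"
    and e'm: "eps' m = eps m - 1"
    and t1: "\<forall>j. eps (m+2*j+1) = Q (m+2*j+1) - 1 \<and> eps (m+2*j+2) = 0"
    and t2: "\<forall>j. eps' (m+2*j+1) = 0 \<and> eps' (m+2*j+2) = Q (m+2*j+2) - 1"
    using rp unfolding rational_pair_def by auto
  let ?Q' = "shQ m Q"
  have q': "vQ ?Q'" by (rule vQ_shQ[OF q])
  have lo: "negaQ (shQ m ?C) (shQ m eps) = negaQ ?C (loS ?Q')"
    unfolding shQ_const by (rule negaQ_cong) (use t1[unfolded tails_lo] in auto)
  have hi: "negaQ (shQ m ?C) (shQ m eps') = negaQ ?C (hiS ?Q')"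
    unfolding shQ_const by (rule negaQ_cong) (use t2[unfolded tails_hi] in auto)
  have le': "\<forall>k\<ge>1. ?Q' k \<le> ?C k" using Qle by (simp add: shQ_def)
  define T where "T = (\<Sum>k. (real (?Q' (Suc k)) - 1) / prodQ ?C (Suc k))"
  have hl: "negaQ ?C (hiS ?Q') - negaQ ?C (loS ?Q') = T"
    unfolding T_def by (rule hi_minus_lo[OF qc q' le'])
  have T1: "T < 1"
  proof -
    define i where "i = n - m - 1"
    have i: "m + Suc i = n" using nm unfolding i_def by simp
    have "?Q' (Suc i) = Q n" unfolding shQ_def i by (rule refl)
    then have "?Q' (Suc i) < q" using Qn by simp
    then show ?thesis unfolding T_def by (rule T_lt1[OF q' q2 le'])
  qed
  have "negaQ ?C eps - negaQ ?C eps' = (-1)^m / prodQ ?C m *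
    ((real (eps m) - real (eps' m)) + (negaQ (shQ m ?C) (shQ m eps) - negaQ (shQ m ?C) (shQ m eps')))"
    by (rule MD[OF valid_const[OF v Qle] valid_const[OF v' Qle] qc m pre])
  also have "\<dots> = (-1)^m / prodQ ?C m * (1 - T)"
  proof -
    have d1: "real (eps m) - real (eps' m) = 1" using e'm em by simp
    have "(real (eps m) - real (eps' m)) + (negaQ (shQ m ?C) (shQ m eps) - negaQ (shQ m ?C) (shQ m eps')) = 1 - T"
      using d1 lo hi hl by linarith
    then show ?thesis by (simp only:)
  qed
  finally have eq: "negaQ ?C eps - negaQ ?C eps' = (-1)^m / prodQ ?C m * (1 - T)" .
  have p: "prodQ ?C m > 0" by (rule prodQ_pos[OF qc])
  have "(-1::real)^m / prodQ ?C m \<noteq> 0" using p by simp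
  then have "negaQ ?C eps - negaQ ?C eps' \<noteq> 0" unfolding eq using T1 by simp
  then show ?thesis unfolding negaq_eq by simp
qed



lemma conv_prefix:
  assumes q: "vQ Q" and ve: "valid_digits Q e" and vz: "\<And>N. valid_digits Q (z N)"
    and ag: "\<And>N. \<forall>k. 1 \<le> k \<and> k \<le> N \<longrightarrow> z N k = e k"
  shows "(\<lambda>N. negaQ Q (z N)) \<longlonglongrightarrow> negaQ Q e"
proof (rule LIM_zero_cancel, rule Lim_null_comparison[of _ "\<lambda>n. (1/2) ^ n"])
  show "\<forall>\<^sub>F N in sequentially. norm (negaQ Q (z N) - negaQ Q e) \<le> (1/2) ^ N"
  proof (rule always_eventually, rule allI)
    fix N
    have "\<bar>negaQ Q (z N) - negaQ Q e\<bar> \<le> 1 / prodQ Q N"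
      by (rule close_prefix[OF vz ve q ag])
    also have "\<dots> \<le> 1 / 2 ^ N" using prodQ_ge[OF q, of N] by (intro frac_le) auto
    finally show "norm (negaQ Q (z N) - negaQ Q e) \<le> (1/2) ^ N" by (simp add: power_one_over)
  qed
  show "(\<lambda>n. (1/2::real) ^ n) \<longlonglongrightarrow> 0" by (rule LIMSEQ_power_zero) auto
qed

lemma part3:
  assumes q: "vQ Q" and Qle: "\<forall>k\<ge>1. Q k \<le> q" and q2: "2 \<le> q"
    and v: "valid_digits Q eps" and v': "valid_digits Q eps'" and rp: "rational_pair Q eps eps' m"
    and nm: "n > m" and Qn: "Q n < q"
  shows "\<not> continuous (at (negaQ Q eps) within {a0 Q - 1..a0 Q}) (fmap Q q)"
proof
  assume cont: "continuous (at (negaQ Q eps) within {a0 Q - 1..a0 Q}) (fmap Q q)"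
  let ?x0 = "negaQ Q eps"
  have qc: "vQ (\<lambda>_. q)" by (rule vQ_const[OF q2])
  have u0: "used_repr Q (eps(0 := 0))" by (rule first_used[OF q v rp])
  have fx0: "fmap Q q ?x0 = negaq q eps"
    using fmap_eval[OF q u0, of q] unfolding negaQ_upd0 negaq_eq by simp
  define z where "z N k = (if 1 \<le> k \<and> k \<le> N then eps' k else 0)" for N k
  have Qg: "\<And>k. 1 \<le> k \<Longrightarrow> 2 \<le> Q k" using q by (simp add: vQ_def)
  have vz: "valid_digits Q (z N)" for N
    unfolding valid_digits_def
  proof (intro allI impI)
    fix k :: nat assume k: "1 \<le> k"
    show "z N k < Q k" using v' Qg[OF k] k by (auto simp: z_def valid_digits_def)
  qed
  have ag: "\<forall>k. 1 \<le> k \<and> k \<le> N \<longrightarrow> z N k = eps' k" for N by (simp add: z_def)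
  have uz: "used_repr Q (z N)" for N
    unfolding used_repr_def
  proof (intro conjI)
    show "valid_digits Q (z N)" by (rule vz)
    show "z N 0 = 0" by (simp add: z_def)
    show "\<not> (\<exists>e m'. valid_digits Q e \<and> rational_pair Q e (z N) m')"
    proof
      assume "\<exists>e m'. valid_digits Q e \<and> rational_pair Q e (z N) m'"
      then obtain e m' where "rational_pair Q e (z N) m'" by blast
      then have "z N (m' + 2*N + 2) = Q (m' + 2*N + 2) - 1" unfolding rational_pair_def by blast
      moreover have "z N (m' + 2*N + 2) = 0" by (simp add: z_def)
      moreover have "2 \<le> Q (m' + 2*N + 2)" by (rule Qg) simp
      ultimately show False by simp
    qed
  qed
  define y where "y N = negaQ Q (z N)" for N
  have yS: "y N \<in> {a0 Q - 1..a0 Q}" for N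
    unfolding y_def S_eq[OF q] by (rule in_S[OF q vz])
  have x0': "negaQ Q eps' = ?x0" using pair_value[OF v v' q rp] by simp
  have ly: "y \<longlonglongrightarrow> ?x0" unfolding y_def
    using conv_prefix[OF q v' vz ag] x0' by simp
  have fy: "fmap Q q (y N) = negaq q (z N)" for N
    unfolding y_def by (rule fmap_eval[OF q uz])
  have l2: "(\<lambda>N. negaq q (z N)) \<longlonglongrightarrow> negaq q eps'"
    unfolding negaq_eq
    by (rule conv_prefix[OF qc valid_const[OF v' Qle] valid_const[OF vz Qle] ag])
  have "(fmap Q q \<circ> y) \<longlonglongrightarrow> fmap Q q ?x0"
    using cont yS ly unfolding continuous_within_sequentially by blast
  then have l1: "(\<lambda>N. negaq q (z N)) \<longlonglongrightarrow> negaq q eps"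
    unfolding fx0 comp_def fy .
  have "negaq q eps = negaq q eps'" by (rule LIMSEQ_unique[OF l1 l2])
  then show False using diff_nonzero[OF q Qle q2 v v' rp nm Qn] by simp
qed


theorem theorem3:
  fixes Q :: "nat \<Rightarrow> nat" and q :: nat
  assumes Qge: "\<forall>k\<ge>1. 2 \<le> Q k"
    and Qle: "\<forall>k\<ge>1. Q k \<le> q"
    and q2: "2 \<le> q"
  shows "(\<forall>x\<in>{a0 Q - 1..a0 Q}. \<not> negaQ_rational Q x \<longrightarrow>
            continuous (at x within {a0 Q - 1..a0 Q}) (fmap Q q))
       \<and> ((\<forall>n\<ge>1. Q n = q) \<longrightarrow>
            (\<forall>x\<in>{a0 Q - 1..a0 Q}. continuous (at x within {a0 Q - 1..a0 Q}) (fmap Q q)))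
       \<and> (\<forall>eps eps' m. valid_digits Q eps \<and> valid_digits Q eps' \<and> rational_pair Q eps eps' m
            \<and> (\<exists>n>m. Q n < q) \<longrightarrow>
            \<not> continuous (at (negaQ Q eps) within {a0 Q - 1..a0 Q}) (fmap Q q))"
proof -
  have q: "vQ Q" using Qge by (simp add: vQ_def)
  show ?thesis
  proof (intro conjI)
    show "\<forall>x\<in>{a0 Q - 1..a0 Q}. \<not> negaQ_rational Q x \<longrightarrow>
            continuous (at x within {a0 Q - 1..a0 Q}) (fmap Q q)"
      using part1[OF q Qle q2] by blast
    show "(\<forall>n\<ge>1. Q n = q) \<longrightarrow>
            (\<forall>x\<in>{a0 Q - 1..a0 Q}. continuous (at x within {a0 Q - 1..a0 Q}) (fmap Q q))"
      using part2[OF q] by blast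
    show "\<forall>eps eps' m. valid_digits Q eps \<and> valid_digits Q eps' \<and> rational_pair Q eps eps' m
            \<and> (\<exists>n>m. Q n < q) \<longrightarrow>
            \<not> continuous (at (negaQ Q eps) within {a0 Q - 1..a0 Q}) (fmap Q q)"
      using part3[OF q Qle q2] by blast
  qed
qed

end
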